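(* Let $\mathcal H=\{H_1,\dots,H_n\}$ be oriented affine hyperplanes in $\mathbb R^d$ and $X\subseteq\mathbb R^d$ such that $(\mathcal H,X)$ is a stable arrangement. Then every nonempty atom $A_\sigma$ ($\sigma\subseteq[n]$) of the cover $\{H_i^+\cap X\}_{i\in[n]}$ of $X$ has nonempty interior.
   Context: An oriented affine hyperplane is $H_i=\{x:w_i\cdot x-h_i=0\}$ with $w_i\in\mathbb R^d\setminus\{0\}$, $h_i\in\mathbb R$, and $H_i^+=\{w_i\cdot x-h_i>0\}$, $H_i^-=\{w_i\cdot x-h_i<0\}$. The atom of $\sigma\subseteq[n]$ is $A_\sigma=\bigl(\bigcap_{i\in\sigma}(H_i^+\cap X)\bigr)\setminus\bigcup_{j\notin\sigma}H_j^+$, with $A_\emptyset=X\setminus\bigcup_iH_i^+$. $(\mathcal H,X)$ is stable if $X$ is open and convex and for every $\sigma\subseteq[n]$ with $X\cap\bigcap_{i\in\sigma}H_i\neq\emptyset$, the affine subspace $\bigcap_{i\in\sigma}H_i$ has dimension $d-|\sigma|$. *)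

theory Defs
  imports "HOL-Analysis.Analysis"
begin

definition hyp :: "(nat \<Rightarrow> 'a::euclidean_space) \<Rightarrow> (nat \<Rightarrow> real) \<Rightarrow> nat \<Rightarrow> 'a set" where
  "hyp w h i = {x. w i \<bullet> x - h i = 0}"

definition hyp_pos :: "(nat \<Rightarrow> 'a::euclidean_space) \<Rightarrow> (nat \<Rightarrow> real) \<Rightarrow> nat \<Rightarrow> 'a set" where
  "hyp_pos w h i = {x. w i \<bullet> x - h i > 0}"

definition hyp_neg :: "(nat \<Rightarrow> 'a::euclidean_space) \<Rightarrow> (nat \<Rightarrow> real) \<Rightarrow> nat \<Rightarrow> 'a set" where
  "hyp_neg w h i = {x. w i \<bullet> x - h i < 0}"

text \<open>Atom of \<sigma> \<subseteq> [n] of the cover {H_i^+ \<inter> X}. Intersecting with X also covers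
  the case \<sigma> = {} where A_{} = X minus the union of all H_i^+.\<close>

definition atom :: "nat \<Rightarrow> (nat \<Rightarrow> 'a::euclidean_space) \<Rightarrow> (nat \<Rightarrow> real) \<Rightarrow> 'a set \<Rightarrow> nat set \<Rightarrow> 'a set" where
  "atom n w h X \<sigma> = (X \<inter> (\<Inter>i\<in>\<sigma>. hyp_pos w h i \<inter> X)) - (\<Union>j\<in>{1..n} - \<sigma>. hyp_pos w h j)"

definition stable :: "nat \<Rightarrow> (nat \<Rightarrow> 'a::euclidean_space) \<Rightarrow> (nat \<Rightarrow> real) \<Rightarrow> 'a set \<Rightarrow> bool" where
  "stable n w h X \<longleftrightarrow> open X \<and> convex X \<and>
     (\<forall>\<sigma>. \<sigma> \<subseteq> {1..n} \<longrightarrow> X \<inter> (\<Inter>i\<in>\<sigma>. hyp w h i) \<noteq> {} \<longrightarrow>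
        aff_dim (\<Inter>i\<in>\<sigma>. hyp w h i) = int DIM('a) - int (card \<sigma>))"

end

theory Submission
  imports Defs
begin

lemma single_dir:
  fixes w :: "nat \<Rightarrow> 'a::euclidean_space"
  assumes st: "stable n w h X" and T: "T \<subseteq> {1..n}" and x: "x \<in> X"
    and on: "\<forall>j\<in>T. w j \<bullet> x = h j" and j: "j \<in> T"
  shows "\<exists>u. w j \<bullet> u = -1 \<and> (\<forall>k\<in>T-{j}. w k \<bullet> u = 0)"
proof -
  have fT: "finite T" using T finite_subset by blast
  define A where "A = (\<Inter>i\<in>T-{j}. hyp w h i)"
  define B where "B = (\<Inter>i\<in>T. hyp w h i)"
  have xA: "x \<in> A" using on unfolding A_def hyp_def by auto
  have xB: "x \<in> B" using on unfolding B_def hyp_def by auto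
  have dA: "aff_dim A = int DIM('a) - int (card (T-{j}))"
    using st T xA x unfolding stable_def A_def by blast
  have dB: "aff_dim B = int DIM('a) - int (card T)"
    using st T xB x unfolding stable_def B_def by blast
  have "card (T-{j}) \<noteq> card T" using fT j
    by (metis card_Diff1_less_iff less_irrefl)
  then have "A \<noteq> B" using dA dB by auto
  moreover have "B = A \<inter> hyp w h j" unfolding A_def B_def using j by blast
  ultimately obtain y where yA: "y \<in> A" and yj: "y \<notin> hyp w h j" by blast
  define vv where "vv = y - x"
  have c: "w j \<bullet> vv \<noteq> 0" using yj on j unfolding vv_def hyp_def
    by (simp add: inner_diff_right)
  have z: "\<forall>k\<in>T-{j}. w k \<bullet> vv = 0" using yA on unfolding vv_def A_def hyp_def
    by (auto simp: inner_diff_right)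
  show ?thesis
    apply (rule exI[of _ "(- 1 / (w j \<bullet> vv)) *\<^sub>R vv"])
    using c z by simp
qed

lemma exists_dir:
  fixes w :: "nat \<Rightarrow> 'a::euclidean_space"
  assumes st: "stable n w h X" and T: "T \<subseteq> {1..n}" and x: "x \<in> X"
    and on: "\<forall>j\<in>T. w j \<bullet> x = h j"
  shows "\<exists>v. \<forall>j\<in>T. w j \<bullet> v = -1"
proof -
  have fT: "finite T" using T finite_subset by blast
  have "\<forall>j\<in>T. \<exists>u. w j \<bullet> u = -1 \<and> (\<forall>k\<in>T-{j}. w k \<bullet> u = 0)"
    using single_dir[OF st T x on] by blast
  then obtain u where u: "\<And>j. j\<in>T \<Longrightarrow> w j \<bullet> u j = -1 \<and> (\<forall>k\<in>T-{j}. w k \<bullet> u j = 0)"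
    by metis
  have "w k \<bullet> (\<Sum>j\<in>T. u j) = -1" if k: "k \<in> T" for k
  proof -
    have "w k \<bullet> (\<Sum>j\<in>T. u j) = (\<Sum>j\<in>T. w k \<bullet> u j)" by (simp add: inner_sum_right)
    also have "\<dots> = w k \<bullet> u k + (\<Sum>j\<in>T-{k}. w k \<bullet> u j)"
      using fT k by (simp add: sum.remove)
    also have "(\<Sum>j\<in>T-{k}. w k \<bullet> u j) = 0"
    proof (intro sum.neutral ballI)
      fix j assume "j \<in> T - {k}"
      then show "w k \<bullet> u j = 0" using u[of j] k by auto
    qed
    finally show ?thesis using u k by simp
  qed
  then show ?thesis by blast
qed

theorem lemma2p4:
  fixes n :: nat and w :: "nat \<Rightarrow> 'a::euclidean_space" and h :: "nat \<Rightarrow> real" and X :: "'a set"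
    and \<sigma> :: "nat set"
  assumes "\<forall>i\<in>{1..n}. w i \<noteq> 0"
    and "stable n w h X"
    and "\<sigma> \<subseteq> {1..n}"
    and "atom n w h X \<sigma> \<noteq> {}"
  shows "interior (atom n w h X \<sigma>) \<noteq> {}"
proof -
  have st: "stable n w h X" by fact
  have oX: "open X" using st unfolding stable_def by blast
  obtain x where xa: "x \<in> atom n w h X \<sigma>" using assms(4) by blast
  have xX: "x \<in> X" using xa unfolding atom_def by blast
  have pos: "\<forall>i\<in>\<sigma>. w i \<bullet> x - h i > 0" using xa unfolding atom_def hyp_pos_def by blast
  have nonpos: "\<forall>j\<in>{1..n}-\<sigma>. w j \<bullet> x - h j \<le> 0"
    using xa unfolding atom_def hyp_pos_def by fastforce
  define T where "T = {j\<in>{1..n}-\<sigma>. w j \<bullet> x - h j = 0}"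
  have T1: "T \<subseteq> {1..n}" unfolding T_def by auto
  have T2: "\<forall>j\<in>T. w j \<bullet> x = h j" unfolding T_def by auto
  obtain v where v: "\<forall>j\<in>T. w j \<bullet> v = -1"
    using exists_dir[OF st T1 xX T2] by blast
  define U where "U = X \<inter> (\<Inter>i\<in>\<sigma>. hyp_pos w h i) \<inter> (\<Inter>j\<in>{1..n}-\<sigma>. hyp_neg w h j)"
  have fs: "finite \<sigma>" using assms(3) finite_subset by blast
  have oU: "open U" unfolding U_def hyp_pos_def hyp_neg_def
    apply (intro open_Int open_INT oX finite_Diff fs finite_atLeastAtMost ballI)
     apply (rule open_Collect_less; intro continuous_intros)
    apply (rule open_Collect_less; intro continuous_intros)
    done
  have sub: "U \<subseteq> atom n w h X \<sigma>"
  proof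
    fix y assume y: "y \<in> U"
    have "y \<in> X" using y unfolding U_def by blast
    moreover have "\<forall>i\<in>\<sigma>. y \<in> hyp_pos w h i" using y unfolding U_def by blast
    moreover have "\<forall>j\<in>{1..n}-\<sigma>. y \<notin> hyp_pos w h j"
    proof
      fix j assume j: "j \<in> {1..n}-\<sigma>"
      then have "y \<in> hyp_neg w h j" using y unfolding U_def by blast
      then show "y \<notin> hyp_pos w h j" unfolding hyp_neg_def hyp_pos_def by simp
    qed
    ultimately show "y \<in> atom n w h X \<sigma>" unfolding atom_def by blast
  qed
  have lim: "((\<lambda>t. x + t *\<^sub>R v) \<longlongrightarrow> x) (at_right (0::real))"
  proof -
    have "((\<lambda>t. x + t *\<^sub>R v) \<longlongrightarrow> x + (0::real) *\<^sub>R v) (at_right (0::real))"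
      by (intro tendsto_intros)
    then show ?thesis by simp
  qed
  have e1: "\<forall>\<^sub>F t in at_right (0::real). x + t *\<^sub>R v \<in> X"
    using topological_tendstoD[OF lim oX xX] .
  have e2: "\<forall>\<^sub>F t in at_right (0::real). \<forall>i\<in>\<sigma>. w i \<bullet> (x + t *\<^sub>R v) - h i > 0"
  proof (rule eventually_ball_finite[OF fs], rule ballI)
    fix i assume i: "i \<in> \<sigma>"
    have "((\<lambda>t. w i \<bullet> (x + t *\<^sub>R v) - h i) \<longlongrightarrow> w i \<bullet> x - h i) (at_right (0::real))"
      by (intro tendsto_intros lim)
    from order_tendstoD(1)[OF this, of 0] show "\<forall>\<^sub>F t in at_right 0. w i \<bullet> (x + t *\<^sub>R v) - h i > 0"
      using pos i by auto
  qed
  have e3: "\<forall>\<^sub>F t in at_right (0::real). \<forall>j\<in>{1..n}-\<sigma>. w j \<bullet> (x + t *\<^sub>R v) - h j < 0"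
  proof (rule eventually_ball_finite, simp, rule ballI)
    fix j assume j: "j \<in> {1..n}-\<sigma>"
    show "\<forall>\<^sub>F t in at_right 0. w j \<bullet> (x + t *\<^sub>R v) - h j < 0"
    proof (cases "j \<in> T")
      case True
      then have "w j \<bullet> x - h j = 0" "w j \<bullet> v = -1" using v T_def by auto
      then show ?thesis using eventually_at_right_less[of "0::real"]
        by (elim eventually_mono) (simp add: inner_add_right algebra_simps)
    next
      case False
      have "w j \<bullet> x - h j \<le> 0" using nonpos j by blast
      moreover have "w j \<bullet> x - h j \<noteq> 0" using False j unfolding T_def by blast
      ultimately have neg: "w j \<bullet> x - h j < 0" by linarith
      have "((\<lambda>t. w j \<bullet> (x + t *\<^sub>R v) - h j) \<longlongrightarrow> w j \<bullet> x - h j) (at_right (0::real))"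
        by (intro tendsto_intros lim)
      from order_tendstoD(2)[OF this neg] show ?thesis .
    qed
  qed
  have "\<forall>\<^sub>F t in at_right (0::real). x + t *\<^sub>R v \<in> U"
    using e1 e2 e3 by eventually_elim (auto simp: U_def hyp_pos_def hyp_neg_def)
  then obtain t where "x + t *\<^sub>R v \<in> U"
    using eventually_happens trivial_limit_at_right_real by blast
  then have "U \<noteq> {}" by blast
  moreover have "U \<subseteq> interior (atom n w h X \<sigma>)" using interior_maximal[OF sub oU] .
  ultimately show ?thesis by blast
qed

end
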